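(* Let $\mathcal{G}$ be a finite connected undirected simple graph with $N$ nodes which is not a tree, with degrees $d_1,\dots,d_N$, leading non-backtracking eigenvalue $\kappa>0$ and non-backtracking centralities $x_1,\dots,x_N$. Then the stationary distribution $\pi^{\mathrm B}=(\pi^{\mathrm B}_1,\dots,\pi^{\mathrm B}_N)$ of the NBCRW on $\mathcal{G}$ is $$\pi_i^{\mathrm B}=\left(\frac{\kappa^2-1}{\kappa}+\frac{d_i}{\kappa}\right)\frac{x_i^2}{Q},\qquad Q=\sum_{i=1}^N\left(\frac{\kappa^2-1}{\kappa}+\frac{d_i}{\kappa}\right)x_i^2 .$$
   Context: The non-backtracking matrix $\mathbf{B}$ of $\mathcal{G}$ is the $2E\times 2E$ matrix indexed by directed edges $i\to j$ (each undirected edge gives two directed edges), with $B_{i\to j,\,k\to l}=1$ if $j=k$ and $i\neq l$, and $0$ otherwise; $\kappa$ is its leading (Perron–Frobenius) eigenvalue and $v=(v_{i\to j})$ a corresponding eigenvector with non-negative entries. The non-backtracking centrality of node $i$ is $x_i=\sum_{j\in\mathcal{N}_i}v_{i\to j}$. The NBCRW on $\mathcal{G}$ (adjacency matrix $(a_{ij})$) is the Markov chain on the nodes with $p_{ij}=\dfrac{a_{ij}x_j}{\sum_{k}a_{ik}x_k}$ (assumed defined). A stationary distribution is a probability vector $\pi$ with $\pi\mathbf{P}=\pi$. *)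

theory Defs
  imports Complex_Main
begin

definition simple_graph :: "'a set \<Rightarrow> ('a \<Rightarrow> 'a \<Rightarrow> bool) \<Rightarrow> bool" where
  "simple_graph V E \<longleftrightarrow> finite V \<and> (\<forall>i j. E i j \<longrightarrow> i \<in> V \<and> j \<in> V)
     \<and> (\<forall>i j. E i j \<longrightarrow> E j i) \<and> (\<forall>i. \<not> E i i)"

definition connected_graph :: "'a set \<Rightarrow> ('a \<Rightarrow> 'a \<Rightarrow> bool) \<Rightarrow> bool" where
  "connected_graph V E \<longleftrightarrow> V \<noteq> {} \<and> (\<forall>i\<in>V. \<forall>j\<in>V. E\<^sup>*\<^sup>* i j)"

definition is_cycle :: "('a \<Rightarrow> 'a \<Rightarrow> bool) \<Rightarrow> 'a list \<Rightarrow> bool" where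
  "is_cycle E cs \<longleftrightarrow> length cs \<ge> 3 \<and> distinct cs
     \<and> (\<forall>k. Suc k < length cs \<longrightarrow> E (cs ! k) (cs ! Suc k))
     \<and> E (last cs) (hd cs)"

definition is_tree :: "'a set \<Rightarrow> ('a \<Rightarrow> 'a \<Rightarrow> bool) \<Rightarrow> bool" where
  "is_tree V E \<longleftrightarrow> connected_graph V E \<and> \<not> (\<exists>cs. is_cycle E cs)"

definition degree :: "'a set \<Rightarrow> ('a \<Rightarrow> 'a \<Rightarrow> bool) \<Rightarrow> 'a \<Rightarrow> nat" where
  "degree V E i = card {j\<in>V. E i j}"

definition dir_edges :: "'a set \<Rightarrow> ('a \<Rightarrow> 'a \<Rightarrow> bool) \<Rightarrow> ('a \<times> 'a) set" where
  "dir_edges V E = {(i, j). i \<in> V \<and> j \<in> V \<and> E i j}"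

definition nb_matrix :: "('a \<times> 'a) \<Rightarrow> ('a \<times> 'a) \<Rightarrow> real" where
  "nb_matrix e f = (if snd e = fst f \<and> fst e \<noteq> snd f then 1 else 0)"

definition nb_eigenvalue :: "'a set \<Rightarrow> ('a \<Rightarrow> 'a \<Rightarrow> bool) \<Rightarrow> complex \<Rightarrow> bool" where
  "nb_eigenvalue V E l \<longleftrightarrow> (\<exists>w :: 'a \<times> 'a \<Rightarrow> complex.
      (\<exists>e\<in>dir_edges V E. w e \<noteq> 0) \<and>
      (\<forall>e\<in>dir_edges V E. (\<Sum>f\<in>dir_edges V E. of_real (nb_matrix e f) * w f) = l * w e))"

definition nb_leading_eigenvalue :: "'a set \<Rightarrow> ('a \<Rightarrow> 'a \<Rightarrow> bool) \<Rightarrow> real \<Rightarrow> bool" where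
  "nb_leading_eigenvalue V E \<kappa> \<longleftrightarrow> nb_eigenvalue V E (of_real \<kappa>)
     \<and> (\<forall>l. nb_eigenvalue V E l \<longrightarrow> cmod l \<le> \<kappa>)"

definition nb_nonneg_eigenvector :: "'a set \<Rightarrow> ('a \<Rightarrow> 'a \<Rightarrow> bool) \<Rightarrow> real \<Rightarrow> ('a \<times> 'a \<Rightarrow> real) \<Rightarrow> bool" where
  "nb_nonneg_eigenvector V E \<kappa> v \<longleftrightarrow>
     (\<forall>e\<in>dir_edges V E. v e \<ge> 0) \<and> (\<exists>e\<in>dir_edges V E. v e \<noteq> 0) \<and>
     (\<forall>e\<in>dir_edges V E. (\<Sum>f\<in>dir_edges V E. nb_matrix e f * v f) = \<kappa> * v e)"

definition nb_centrality :: "'a set \<Rightarrow> ('a \<Rightarrow> 'a \<Rightarrow> bool) \<Rightarrow> ('a \<times> 'a \<Rightarrow> real) \<Rightarrow> 'a \<Rightarrow> real" where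
  "nb_centrality V E v i = (\<Sum>j\<in>{j\<in>V. E i j}. v (i, j))"

definition nbcrw :: "'a set \<Rightarrow> ('a \<Rightarrow> 'a \<Rightarrow> bool) \<Rightarrow> ('a \<Rightarrow> real) \<Rightarrow> 'a \<Rightarrow> 'a \<Rightarrow> real" where
  "nbcrw V E x i j = (if E i j then x j else 0) / (\<Sum>k\<in>{k\<in>V. E i k}. x k)"

definition stationary_distribution :: "'a set \<Rightarrow> ('a \<Rightarrow> 'a \<Rightarrow> real) \<Rightarrow> ('a \<Rightarrow> real) \<Rightarrow> bool" where
  "stationary_distribution V P \<pi> \<longleftrightarrow> (\<forall>i\<in>V. \<pi> i \<ge> 0) \<and> (\<Sum>i\<in>V. \<pi> i) = 1
     \<and> (\<forall>j\<in>V. (\<Sum>i\<in>V. \<pi> i * P i j) = \<pi> j)"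

end

theory Submission
  imports Defs
begin

context
  fixes V :: "'a set" and E :: "'a \<Rightarrow> 'a \<Rightarrow> bool"
    and \<kappa> :: real and v :: "'a \<times> 'a \<Rightarrow> real"
  assumes sg: "simple_graph V E" and kpos: "\<kappa> > 0"
    and ev: "nb_nonneg_eigenvector V E \<kappa> v"
begin

lemma finV: "finite V" using sg by (simp add: simple_graph_def)
lemma Ein: "E i j \<Longrightarrow> i \<in> V \<and> j \<in> V" using sg by (simp add: simple_graph_def)
lemma Esym: "E i j \<Longrightarrow> E j i" using sg by (simp add: simple_graph_def)
lemma Eirr: "\<not> E i i" using sg by (simp add: simple_graph_def)
lemma finN: "finite {j\<in>V. E i j}" using finV by simp
lemma finD: "finite (dir_edges V E)"
proof -
  have "dir_edges V E \<subseteq> V \<times> V" by (auto simp: dir_edges_def)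
  thus ?thesis using finV finite_subset by blast
qed

lemma vnn: "E i j \<Longrightarrow> v (i,j) \<ge> 0"
  using ev Ein[of i j] by (auto simp: nb_nonneg_eigenvector_def dir_edges_def)

lemma xnn: "nb_centrality V E v i \<ge> 0"
  unfolding nb_centrality_def by (rule sum_nonneg) (auto intro: vnn)

lemma L1:
  assumes "E i j"
  shows "\<kappa> * v (i,j) = nb_centrality V E v j - v (j,i)"
proof -
  have inD: "(i,j) \<in> dir_edges V E" using assms Ein by (auto simp: dir_edges_def)
  have "(\<Sum>f\<in>dir_edges V E. nb_matrix (i,j) f * v f) = \<kappa> * v (i,j)"
    using ev inD by (auto simp: nb_nonneg_eigenvector_def)
  moreover have "(\<Sum>f\<in>dir_edges V E. nb_matrix (i,j) f * v f)
      = (\<Sum>f\<in>{f\<in>dir_edges V E. fst f = j \<and> snd f \<noteq> i}. v f)"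
    by (subst sum.inter_filter[OF finD]) (auto simp: nb_matrix_def intro!: sum.cong)
  moreover have "{f\<in>dir_edges V E. fst f = j \<and> snd f \<noteq> i} = (\<lambda>l. (j,l)) ` ({l\<in>V. E j l} - {i})"
    using Ein by (auto simp: dir_edges_def)
  moreover have "(\<Sum>f\<in>(\<lambda>l. (j,l)) ` ({l\<in>V. E j l} - {i}). v f) = (\<Sum>l\<in>{l\<in>V. E j l} - {i}. v (j,l))"
    by (subst sum.reindex) (auto simp: inj_on_def)
  moreover have "nb_centrality V E v j = v (j,i) + (\<Sum>l\<in>{l\<in>V. E j l} - {i}. v (j,l))"
    unfolding nb_centrality_def
    using sum.remove[OF finN[of j], of i "\<lambda>l. v (j,l)"] Esym[OF assms] Ein[OF assms] by auto
  ultimately show ?thesis by (metis add_diff_cancel_left')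
qed

lemma L2:
  assumes "i \<in> V"
  shows "\<kappa> * (\<Sum>j\<in>{j\<in>V. E i j}. v (j,i)) = (real (degree V E i) - 1) * nb_centrality V E v i"
proof -
  have "\<kappa> * (\<Sum>j\<in>{j\<in>V. E i j}. v (j,i)) = (\<Sum>j\<in>{j\<in>V. E i j}. nb_centrality V E v i - v (i,j))"
    by (simp add: sum_distrib_left L1 Esym)
  also have "\<dots> = real (degree V E i) * nb_centrality V E v i - nb_centrality V E v i"
    by (simp add: sum_subtractf degree_def nb_centrality_def)
  finally show ?thesis by (simp add: algebra_simps)
qed

definition "ss i = (\<Sum>k\<in>{k\<in>V. E i k}. nb_centrality V E v k)"

lemma ss_eq: "ss i = (\<Sum>k\<in>{k\<in>V. E i k}. nb_centrality V E v k)" by (simp add: ss_def)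

lemma L3:
  assumes "i \<in> V"
  shows "\<kappa> * nb_centrality V E v i = ss i - (\<Sum>j\<in>{j\<in>V. E i j}. v (j,i))"
proof -
  have "\<kappa> * nb_centrality V E v i = (\<Sum>j\<in>{j\<in>V. E i j}. nb_centrality V E v j - v (j,i))"
    unfolding nb_centrality_def[of V E v i] by (simp add: sum_distrib_left L1)
  thus ?thesis by (simp add: sum_subtractf ss_def)
qed

lemma key:
  assumes "i \<in> V"
  shows "\<kappa> * ss i = (\<kappa>\<^sup>2 - 1 + real (degree V E i)) * nb_centrality V E v i"
proof -
  have "\<kappa> * (\<kappa> * nb_centrality V E v i) = \<kappa> * ss i - (real (degree V E i) - 1) * nb_centrality V E v i"
    using L2[OF assms] L3[OF assms] by (simp add: right_diff_distrib)
  thus ?thesis by (simp add: power2_eq_square algebra_simps)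
qed

lemma weight:
  assumes "i \<in> V"
  shows "((\<kappa>\<^sup>2 - 1) / \<kappa> + real (degree V E i) / \<kappa>) * (nb_centrality V E v i)\<^sup>2
     = nb_centrality V E v i * ss i"
proof -
  have "((\<kappa>\<^sup>2 - 1) / \<kappa> + real (degree V E i) / \<kappa>) = (\<kappa>\<^sup>2 - 1 + real (degree V E i)) / \<kappa>"
    by (simp add: add_divide_distrib)
  also have "\<dots> * (nb_centrality V E v i)\<^sup>2 = (\<kappa> * ss i) / \<kappa> * nb_centrality V E v i"
    by (simp add: key[OF assms] power2_eq_square)
  finally show ?thesis using kpos by simp
qed

lemma xpos:
  assumes conn: "connected_graph V E" and i: "i \<in> V"
  shows "nb_centrality V E v i > 0"
proof (rule ccontr)
  assume "\<not> ?thesis"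
  hence z: "nb_centrality V E v i = 0" using xnn[of i] by simp
  have prp: "nb_centrality V E v b = 0" if "E a b" "nb_centrality V E v a = 0" for a b
  proof -
    have a: "a \<in> V" "b \<in> V" using Ein[OF that(1)] by auto
    have "v (a,b) = 0"
    proof -
      have "\<forall>l\<in>{l\<in>V. E a l}. v (a,l) = 0"
        using that(2) sum_nonneg_eq_0_iff[OF finN[of a], of "\<lambda>l. v (a,l)"] vnn
        unfolding nb_centrality_def by auto
      thus ?thesis using a that(1) by auto
    qed
    moreover have "v (b,a) = 0"
    proof -
      have "(\<Sum>j\<in>{j\<in>V. E a j}. v (j,a)) = 0" using L2[OF a(1)] that(2) kpos by simp
      hence "\<forall>l\<in>{l\<in>V. E a l}. v (l,a) = 0"
        using sum_nonneg_eq_0_iff[OF finN[of a], of "\<lambda>l. v (l,a)"] vnn Esym by auto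
      thus ?thesis using a that(1) by auto
    qed
    ultimately show ?thesis using L1[OF that(1)] by simp
  qed
  have all: "nb_centrality V E v j = 0" if "E\<^sup>*\<^sup>* i j" for j
    using that by (induction rule: rtranclp_induct) (auto simp: z intro: prp)
  obtain e where e: "e \<in> dir_edges V E" "v e \<noteq> 0" using ev by (auto simp: nb_nonneg_eigenvector_def)
  obtain a b where ab: "e = (a,b)" "E a b" "a \<in> V" using e by (auto simp: dir_edges_def)
  have "v (a,b) > 0" using vnn[OF ab(2)] e ab by auto
  moreover have "v (a,b) \<le> nb_centrality V E v a"
    unfolding nb_centrality_def
    by (rule member_le_sum) (use ab Ein vnn finN in auto)
  moreover have "nb_centrality V E v a = 0" using all conn i ab(3) by (auto simp: connected_graph_def)
  ultimately show False by simp
qed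

end

theorem theorem2:
  fixes V :: "'a set" and E :: "'a \<Rightarrow> 'a \<Rightarrow> bool"
    and \<kappa> :: real and v :: "'a \<times> 'a \<Rightarrow> real"
  assumes "simple_graph V E" and "connected_graph V E" and "\<not> is_tree V E"
    and "nb_leading_eigenvalue V E \<kappa>" and "\<kappa> > 0"
    and "nb_nonneg_eigenvector V E \<kappa> v"
    and "\<forall>i\<in>V. (\<Sum>k\<in>{k\<in>V. E i k}. nb_centrality V E v k) \<noteq> 0"
  shows "let x = nb_centrality V E v;
             Q = (\<Sum>i\<in>V. ((\<kappa>\<^sup>2 - 1) / \<kappa> + real (degree V E i) / \<kappa>) * (x i)\<^sup>2);
             \<pi>B = (\<lambda>i. ((\<kappa>\<^sup>2 - 1) / \<kappa> + real (degree V E i) / \<kappa>) * (x i)\<^sup>2 / Q)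
         in stationary_distribution V (nbcrw V E x) \<pi>B
            \<and> (\<forall>\<pi>. stationary_distribution V (nbcrw V E x) \<pi> \<longrightarrow> (\<forall>i\<in>V. \<pi> i = \<pi>B i))"
proof -
  note sg = assms(1) and conn = assms(2) and kpos = assms(5) and ev = assms(6)
  define x where "x = nb_centrality V E v"
  define s where "s i = (\<Sum>k\<in>{k\<in>V. E i k}. x k)" for i
  have finV: "finite V" using sg by (simp add: simple_graph_def)
  have finN: "finite {k\<in>V. E i k}" for i using finV by simp
  have Esym: "E i j \<Longrightarrow> E j i" for i j using sg by (simp add: simple_graph_def)
  have w: "((\<kappa>\<^sup>2 - 1) / \<kappa> + real (degree V E i) / \<kappa>) * (x i)\<^sup>2 = x i * s i" if "i \<in> V" for i
    using weight[OF sg kpos ev that] by (simp add: x_def s_def ss_eq[OF sg kpos ev])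
  have xp: "x i > 0" if "i \<in> V" for i using xpos[OF sg kpos ev conn that] by (simp add: x_def)
  have xn: "x i \<ge> 0" for i using xnn[OF sg kpos ev] by (simp add: x_def)
  have sp: "s i > 0" if "i \<in> V" for i
  proof -
    have "s i \<ge> 0" unfolding s_def by (rule sum_nonneg) (use xn in auto)
    moreover have "s i \<noteq> 0" using assms(7) that by (simp add: s_def x_def)
    ultimately show ?thesis by simp
  qed
  define Q where "Q = (\<Sum>i\<in>V. x i * s i)"
  have Qeq: "(\<Sum>i\<in>V. ((\<kappa>\<^sup>2 - 1) / \<kappa> + real (degree V E i) / \<kappa>) * (x i)\<^sup>2) = Q"
    unfolding Q_def by (rule sum.cong) (auto simp: w)
  obtain i0 where i0: "i0 \<in> V" using conn by (auto simp: connected_graph_def)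
  have Qp: "Q > 0"
  proof -
    have "x i0 * s i0 \<le> Q" unfolding Q_def
      by (rule member_le_sum) (use i0 finV xp sp in \<open>auto intro: less_imp_le\<close>)
    moreover have "x i0 * s i0 > 0" using xp sp i0 by simp
    ultimately show ?thesis by simp
  qed
  define \<pi>B where "\<pi>B i = x i * s i / Q" for i
  have pieq: "((\<kappa>\<^sup>2 - 1) / \<kappa> + real (degree V E i) / \<kappa>) * (x i)\<^sup>2 / Q = \<pi>B i" if "i \<in> V" for i
    using w[OF that] by (simp add: \<pi>B_def)
  have nb: "nbcrw V E x i j = (if E i j then x j else 0) / s i" for i j
    by (simp add: nbcrw_def s_def)
  have Nsym: "{i\<in>V. E i j} = {i\<in>V. E j i}" for j using Esym by blast
  have stat: "stationary_distribution V (nbcrw V E x) \<pi>B"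
    unfolding stationary_distribution_def
  proof (intro conjI ballI)
    fix i assume "i \<in> V" thus "\<pi>B i \<ge> 0" using xp[of i] sp[of i] Qp by (simp add: \<pi>B_def)
  next
    show "sum \<pi>B V = 1" using Qp by (simp add: \<pi>B_def Q_def flip: sum_divide_distrib)
  next
    fix j assume j: "j \<in> V"
    have "(\<Sum>i\<in>V. \<pi>B i * nbcrw V E x i j) = (\<Sum>i\<in>V. if E i j then x j / Q * x i else 0)"
      by (rule sum.cong[OF refl]) (use sp in \<open>fastforce simp: \<pi>B_def nb\<close>)
    also have "\<dots> = (\<Sum>i\<in>{i\<in>V. E i j}. x j / Q * x i)"
      by (subst sum.inter_filter[OF finV]) (rule refl)
    also have "\<dots> = x j / Q * s j" by (simp add: s_def Nsym sum_distrib_left)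
    finally show "(\<Sum>i\<in>V. \<pi>B i * nbcrw V E x i j) = \<pi>B j" by (simp add: \<pi>B_def)
  qed
  have uniq: "\<pi> i = \<pi>B i" if st: "stationary_distribution V (nbcrw V E x) \<pi>" and i: "i \<in> V" for \<pi> i
  proof -
    define h where "h i = \<pi> i / (x i * s i)" for i
    have pih: "\<pi> i = h i * (x i * s i)" if "i \<in> V" for i
      using xp[OF that] sp[OF that] by (simp add: h_def)
    have harm: "h j * s j = (\<Sum>i\<in>{i\<in>V. E j i}. h i * x i)" if j: "j \<in> V" for j
    proof -
      have "\<pi> j = (\<Sum>i\<in>V. \<pi> i * nbcrw V E x i j)" using st j by (simp add: stationary_distribution_def)
      also have "\<dots> = (\<Sum>i\<in>V. if E i j then x j * (h i * x i) else 0)"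
        by (rule sum.cong[OF refl]) (use sp pih in \<open>fastforce simp: nb\<close>)
      also have "\<dots> = (\<Sum>i\<in>{i\<in>V. E i j}. x j * (h i * x i))"
        by (subst sum.inter_filter[OF finV]) (rule refl)
      also have "\<dots> = x j * (\<Sum>i\<in>{i\<in>V. E j i}. h i * x i)"
        by (simp add: Nsym sum_distrib_left)
      finally have "x j * (h j * s j) = x j * (\<Sum>i\<in>{i\<in>V. E j i}. h i * x i)"
        using pih[OF j] by (simp add: algebra_simps)
      thus ?thesis using xp[OF j] by simp
    qed
    define M where "M = Max (h ` V)"
    have hM: "h i \<le> M" if "i \<in> V" for i unfolding M_def using finV that by simp
    obtain m where m: "m \<in> V" "h m = M"
    proof -
      have "M \<in> h ` V" unfolding M_def using finV i0 by (intro Max_in) auto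
      thus ?thesis using that by auto
    qed
    have hstep: "h b = M" if "E a b" "h a = M" "a \<in> V" for a b
    proof -
      have bV: "b \<in> V" using sg that(1) by (simp add: simple_graph_def)
      have "(\<Sum>i\<in>{i\<in>V. E a i}. (M - h i) * x i) = M * s a - h a * s a"
        using harm[OF that(3)] by (simp add: left_diff_distrib sum_subtractf s_def sum_distrib_left)
      also have "\<dots> = 0" using that(2) by simp
      finally have "\<forall>i\<in>{i\<in>V. E a i}. (M - h i) * x i = 0"
        using sum_nonneg_eq_0_iff[OF finN[of a], of "\<lambda>i. (M - h i) * x i"] hM xn by auto
      hence "(M - h b) * x b = 0" using bV that(1) by auto
      thus ?thesis using xp[OF bV] by simp
    qed
    have allM: "h j = M" if "E\<^sup>*\<^sup>* m j" for j
      using that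
    proof (induction rule: rtranclp_induct)
      case base then show ?case using m by simp
    next
      case (step y z)
      have "y \<in> V" using sg step(2) by (simp add: simple_graph_def)
      then show ?case using hstep[OF step(2) step(3)] by simp
    qed
    have hall: "h j = M" if "j \<in> V" for j
      using allM conn m(1) that by (auto simp: connected_graph_def)
    have "1 = (\<Sum>j\<in>V. \<pi> j)" using st by (simp add: stationary_distribution_def)
    also have "\<dots> = (\<Sum>j\<in>V. M * (x j * s j))" by (rule sum.cong) (auto simp: pih hall)
    also have "\<dots> = M * Q" by (simp add: Q_def sum_distrib_left)
    finally have "M = 1 / Q" using Qp by (simp add: field_simps)
    thus ?thesis using pih[OF i] hall[OF i] by (simp add: \<pi>B_def)
  qed
  show ?thesis
  proof -
    have c: "stationary_distribution V P f \<longleftrightarrow> stationary_distribution V P g"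
      if "\<forall>i\<in>V. f i = g i" for P f g
      using that unfolding stationary_distribution_def
      by (simp cong: sum.cong)
    have eqV: "\<forall>i\<in>V. ((\<kappa>\<^sup>2 - 1) / \<kappa> + real (degree V E i) / \<kappa>) * (x i)\<^sup>2 / Q = \<pi>B i"
      using pieq by blast
    have "stationary_distribution V (nbcrw V E x) (\<lambda>i. ((\<kappa>\<^sup>2 - 1) / \<kappa> + real (degree V E i) / \<kappa>) * (x i)\<^sup>2 / Q)"
      using c[OF eqV] stat by blast
    moreover have "\<forall>\<pi>. stationary_distribution V (nbcrw V E x) \<pi> \<longrightarrow> (\<forall>i\<in>V. \<pi> i = ((\<kappa>\<^sup>2 - 1) / \<kappa> + real (degree V E i) / \<kappa>) * (x i)\<^sup>2 / Q)"
      using uniq eqV by simp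
    ultimately show ?thesis unfolding Let_def x_def[symmetric] Qeq by (rule conjI)
  qed
qed

end
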